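(* Let $X$ be a metric space with bounded geometry, $1\leq p<\infty$, and let $E$, $\pi$, $\mathcal{P}$ be as in the context. Then $\pi(\mathcal{P})E$ and the standard pair $B^p_u(X)$ are isomorphic as Banach $B^p_u(X)$-pairs, via the maps $\pi(\mathcal{P})^>E^>\to B^p_u(X)$, $\pi(\mathcal{P})^>\xi^>\mapsto[e_x^*(\xi^>_{xy})]_{x,y\in X}$, and $B^p_u(X)\to\pi(\mathcal{P})^<E^<$, $S=[S_{xy}]\mapsto[S_{xy}e_y^*]_{x,y\in X}$.
   Context: Let $1/p+1/q=1$. $X$ has bounded geometry (countable, balls of radius $R$ uniformly finite). $B^p_u(X)$ is the norm closure in $B(\ell^p(X))$ of the bounded finite-propagation operators; $UB^p(X)$ is the norm closure in $B(\ell^p(X,\ell^p))$ of bounded finite-propagation operators $T=(T_{xy})$, $T_{xy}\in B(\ell^p)$, of uniformly bounded rank. The standard $B^p_u(X)$-pair is $(B^p_u(X),B^p_u(X))$ with pairing the product. $E$: $E^>$ (resp. $E^<$) is the operator-norm completion of the finite-propagation $X\times X$ matrices with uniformly bounded entries in $\ell^p$ (resp. $\ell^q$), viewed as operators $\ell^p(X)\to\ell^p(X,\ell^p)$, $(T\eta)_x=\sum_yT_{xy}\eta_y$ (resp. $\ell^p(X,\ell^p)\to\ell^p(X)$, $(S\xi)_x=\sum_y\langle S_{xy},\xi_y\rangle$). $B^p_u(X)$ acts by composition on the right of $E^>$ and left of $E^<$, and $\langle e^<,e^>\rangle=e^<e^>$. $\pi:UB^p(X)\to\mathcal{L}(E)$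 is $\pi(T)^>e^>=Te^>$, $\pi(T)^<e^<=e^<T$. Fix an injection of $X$ into the index set of the standard basis of $\ell^p$; $e_x\in\ell^p$ and $e_x^*\in\ell^q$ are the corresponding basis vector and coordinate functional, $e_{xy}:\eta\mapsto e_y^*(\eta)e_x$, and $\mathcal{P}$ is the diagonal operator on $\ell^p(X,\ell^p)$ with $\mathcal{P}_{xx}=e_{xx}$. Thus $(\pi(\mathcal{P})^>\xi^>)_{xy}=e_x^*(\xi^>_{xy})e_x$ and $(\pi(\mathcal{P})^<\xi^<)_{xy}=\xi^<_{xy}(e_y)e_y^*$. $\pi(\mathcal{P})E$ is the $B^p_u(X)$-pair $(\pi(\mathcal{P})^<E^<,\pi(\mathcal{P})^>E^>)$ with the restricted pairing. Isomorphism of Banach pairs means module isomorphisms on each side compatible with the pairings. *)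

theory Defs
  imports "HOL-Analysis.Analysis"
begin

text \<open>Scalars are complex. Operators are represented by their matrices; the action of a
matrix on a vector is given by (absolutely convergent) infinite sums.\<close>

definition lp :: "real \<Rightarrow> ('i \<Rightarrow> complex) \<Rightarrow> bool" where
  "lp p f \<longleftrightarrow> (\<lambda>i. norm (f i) powr p) summable_on UNIV"

definition lpnorm :: "real \<Rightarrow> ('i \<Rightarrow> complex) \<Rightarrow> real" where
  "lpnorm p f = (\<Sum>\<^sub>\<infinity>i. norm (f i) powr p) powr (1 / p)"

text \<open>Conjugate exponent q = p/(p-1); q = infinity when p = 1.\<close>
definition conj_exp :: "real \<Rightarrow> real" where
  "conj_exp p = p / (p - 1)"

definition lq :: "real \<Rightarrow> ('i \<Rightarrow> complex) \<Rightarrow> bool" where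
  "lq p f \<longleftrightarrow> (if p = 1 then (\<exists>C. \<forall>i. norm (f i) \<le> C)
                  else (\<lambda>i. norm (f i) powr conj_exp p) summable_on UNIV)"

definition lqnorm :: "real \<Rightarrow> ('i \<Rightarrow> complex) \<Rightarrow> real" where
  "lqnorm p f = (if p = 1 then (SUP i. norm (f i))
                 else (\<Sum>\<^sub>\<infinity>i. norm (f i) powr conj_exp p) powr (1 / conj_exp p))"

definition lpX :: "real \<Rightarrow> ('x \<Rightarrow> complex) set" where
  "lpX p = {f. lp p f}"

definition nX :: "real \<Rightarrow> ('x \<Rightarrow> complex) \<Rightarrow> real" where
  "nX p f = lpnorm p f"

definition lpXlp :: "real \<Rightarrow> ('x \<Rightarrow> nat \<Rightarrow> complex) set" where
  "lpXlp p = {\<xi>. (\<forall>x. lp p (\<xi> x)) \<and> (\<lambda>x. lpnorm p (\<xi> x) powr p) summable_on UNIV}"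

definition nXlp :: "real \<Rightarrow> ('x \<Rightarrow> nat \<Rightarrow> complex) \<Rightarrow> real" where
  "nXlp p \<xi> = (\<Sum>\<^sub>\<infinity>x. lpnorm p (\<xi> x) powr p) powr (1 / p)"

definition op_bounded_by ::
  "'a set \<Rightarrow> ('a \<Rightarrow> real) \<Rightarrow> 'b set \<Rightarrow> ('b \<Rightarrow> real) \<Rightarrow> ('a \<Rightarrow> 'b) \<Rightarrow> real \<Rightarrow> bool" where
  "op_bounded_by V nV W nW f C \<longleftrightarrow> (\<forall>v\<in>V. f v \<in> W \<and> nW (f v) \<le> C * nV v)"

definition actB :: "('x \<Rightarrow> 'x \<Rightarrow> complex) \<Rightarrow> ('x \<Rightarrow> complex) \<Rightarrow> ('x \<Rightarrow> complex)" where
  "actB A \<eta> = (\<lambda>x. \<Sum>\<^sub>\<infinity>y. A x y * \<eta> y)"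

definition bddB :: "real \<Rightarrow> ('x \<Rightarrow> 'x \<Rightarrow> complex) \<Rightarrow> real \<Rightarrow> bool" where
  "bddB p A C \<longleftrightarrow> (\<forall>\<eta>\<in>lpX p. \<forall>x. (\<lambda>y. A x y * \<eta> y) summable_on UNIV)
     \<and> op_bounded_by (lpX p) (nX p) (lpX p) (nX p) (actB A) C"

definition fin_prop :: "('x::metric_space \<Rightarrow> 'x \<Rightarrow> complex) \<Rightarrow> bool" where
  "fin_prop A \<longleftrightarrow> (\<exists>R. \<forall>x y. R < dist x y \<longrightarrow> A x y = 0)"

definition Bpu :: "real \<Rightarrow> ('x::metric_space \<Rightarrow> 'x \<Rightarrow> complex) set" where
  "Bpu p = {A. (\<exists>C. bddB p A C) \<and>
     (\<forall>\<epsilon>>0. \<exists>G. fin_prop G \<and> (\<exists>C. bddB p G C) \<and>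
        bddB p (\<lambda>x y. A x y - G x y) \<epsilon>)}"

definition mmul :: "('x \<Rightarrow> 'x \<Rightarrow> complex) \<Rightarrow> ('x \<Rightarrow> 'x \<Rightarrow> complex) \<Rightarrow> ('x \<Rightarrow> 'x \<Rightarrow> complex)" where
  "mmul a b = (\<lambda>x y. \<Sum>\<^sub>\<infinity>z. a x z * b z y)"

definition fin_propV :: "('x::metric_space \<Rightarrow> 'x \<Rightarrow> nat \<Rightarrow> complex) \<Rightarrow> bool" where
  "fin_propV T \<longleftrightarrow> (\<exists>R. \<forall>x y. R < dist x y \<longrightarrow> (\<forall>n. T x y n = 0))"

definition actEgt :: "('x \<Rightarrow> 'x \<Rightarrow> nat \<Rightarrow> complex) \<Rightarrow> ('x \<Rightarrow> complex) \<Rightarrow> ('x \<Rightarrow> nat \<Rightarrow> complex)" where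
  "actEgt T \<eta> = (\<lambda>x n. \<Sum>\<^sub>\<infinity>y. T x y n * \<eta> y)"

definition bddEgt :: "real \<Rightarrow> ('x \<Rightarrow> 'x \<Rightarrow> nat \<Rightarrow> complex) \<Rightarrow> real \<Rightarrow> bool" where
  "bddEgt p T C \<longleftrightarrow> (\<forall>\<eta>\<in>lpX p. \<forall>x n. (\<lambda>y. T x y n * \<eta> y) summable_on UNIV)
     \<and> op_bounded_by (lpX p) (nX p) (lpXlp p) (nXlp p) (actEgt T) C"

definition Egt :: "real \<Rightarrow> ('x::metric_space \<Rightarrow> 'x \<Rightarrow> nat \<Rightarrow> complex) set" where
  "Egt p = {T. (\<exists>C. bddEgt p T C) \<and>
     (\<forall>\<epsilon>>0. \<exists>G. fin_propV G \<and> (\<exists>C. \<forall>x y. lp p (G x y) \<and> lpnorm p (G x y) \<le> C) \<and>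
        bddEgt p (\<lambda>x y n. T x y n - G x y n) \<epsilon>)}"

definition actElt :: "('x \<Rightarrow> 'x \<Rightarrow> nat \<Rightarrow> complex) \<Rightarrow> ('x \<Rightarrow> nat \<Rightarrow> complex) \<Rightarrow> ('x \<Rightarrow> complex)" where
  "actElt S \<xi> = (\<lambda>x. \<Sum>\<^sub>\<infinity>y. \<Sum>\<^sub>\<infinity>n. S x y n * \<xi> y n)"

definition bddElt :: "real \<Rightarrow> ('x \<Rightarrow> 'x \<Rightarrow> nat \<Rightarrow> complex) \<Rightarrow> real \<Rightarrow> bool" where
  "bddElt p S C \<longleftrightarrow> (\<forall>\<xi>\<in>lpXlp p. \<forall>x.
        (\<forall>y. (\<lambda>n. S x y n * \<xi> y n) summable_on UNIV) \<and>
        (\<lambda>y. \<Sum>\<^sub>\<infinity>n. S x y n * \<xi> y n) summable_on UNIV)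
     \<and> op_bounded_by (lpXlp p) (nXlp p) (lpX p) (nX p) (actElt S) C"

definition Elt :: "real \<Rightarrow> ('x::metric_space \<Rightarrow> 'x \<Rightarrow> nat \<Rightarrow> complex) set" where
  "Elt p = {S. (\<exists>C. bddElt p S C) \<and>
     (\<forall>\<epsilon>>0. \<exists>G. fin_propV G \<and> (\<exists>C. \<forall>x y. lq p (G x y) \<and> lqnorm p (G x y) \<le> C) \<and>
        bddElt p (\<lambda>x y n. S x y n - G x y n) \<epsilon>)}"

definition ract :: "('x \<Rightarrow> 'x \<Rightarrow> nat \<Rightarrow> complex) \<Rightarrow> ('x \<Rightarrow> 'x \<Rightarrow> complex) \<Rightarrow> ('x \<Rightarrow> 'x \<Rightarrow> nat \<Rightarrow> complex)" where
  "ract T b = (\<lambda>x y n. \<Sum>\<^sub>\<infinity>z. T x z n * b z y)"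

definition lact :: "('x \<Rightarrow> 'x \<Rightarrow> complex) \<Rightarrow> ('x \<Rightarrow> 'x \<Rightarrow> nat \<Rightarrow> complex) \<Rightarrow> ('x \<Rightarrow> 'x \<Rightarrow> nat \<Rightarrow> complex)" where
  "lact b S = (\<lambda>x y n. \<Sum>\<^sub>\<infinity>z. b x z * S z y n)"

definition pairing :: "('x \<Rightarrow> 'x \<Rightarrow> nat \<Rightarrow> complex) \<Rightarrow> ('x \<Rightarrow> 'x \<Rightarrow> nat \<Rightarrow> complex) \<Rightarrow> ('x \<Rightarrow> 'x \<Rightarrow> complex)" where
  "pairing S T = (\<lambda>x y. \<Sum>\<^sub>\<infinity>z. \<Sum>\<^sub>\<infinity>n. S x z n * T z y n)"

text \<open>The diagonal operator P on l^p(X,l^p): P_xx = e_xx, as a matrix with entries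
  P x y m n (block (x,y), entry (m,n) of the operator on l^p).\<close>
definition Pmat :: "('x \<Rightarrow> nat) \<Rightarrow> 'x \<Rightarrow> 'x \<Rightarrow> nat \<Rightarrow> nat \<Rightarrow> complex" where
  "Pmat \<iota> x y m n = (if x = y \<and> m = \<iota> x \<and> n = \<iota> x then 1 else 0)"

text \<open>pi(P)^> e = P e and pi(P)^< e = e P (compositions written as matrix products).\<close>
definition piG :: "('x \<Rightarrow> nat) \<Rightarrow> ('x \<Rightarrow> 'x \<Rightarrow> nat \<Rightarrow> complex) \<Rightarrow> ('x \<Rightarrow> 'x \<Rightarrow> nat \<Rightarrow> complex)" where
  "piG \<iota> T = (\<lambda>x y m. \<Sum>\<^sub>\<infinity>z. \<Sum>\<^sub>\<infinity>n. Pmat \<iota> x z m n * T z y n)"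

definition piL :: "('x \<Rightarrow> nat) \<Rightarrow> ('x \<Rightarrow> 'x \<Rightarrow> nat \<Rightarrow> complex) \<Rightarrow> ('x \<Rightarrow> 'x \<Rightarrow> nat \<Rightarrow> complex)" where
  "piL \<iota> S = (\<lambda>x y n. \<Sum>\<^sub>\<infinity>z. \<Sum>\<^sub>\<infinity>m. S x z m * Pmat \<iota> z y m n)"

definition bounded_geometry :: "'x::metric_space itself \<Rightarrow> bool" where
  "bounded_geometry _ \<longleftrightarrow> countable (UNIV :: 'x set) \<and>
     (\<forall>R. \<exists>N::nat. \<forall>x::'x. finite (cball x R) \<and> card (cball x R) \<le> N)"

end

theory Submission
  imports Defs
begin

lemma infsum_spike:
  fixes c :: "'b::{comm_monoid_add,t2_space}"
  shows "infsum (\<lambda>n. if n = k then c else 0) UNIV = c"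
proof -
  have "infsum (\<lambda>n. if n = k then c else 0) UNIV = infsum (\<lambda>n. if n = k then c else 0) {k}"
    by (rule infsum_cong_neutral) auto
  then show ?thesis by simp
qed

lemma summable_spike:
  fixes c :: "'b::{comm_monoid_add,t2_space}"
  shows "(\<lambda>n. if n = k then c else 0) summable_on A"
proof -
  have "(\<lambda>n. if n = k then c else 0) summable_on (A \<inter> {k})" by simp
  then show ?thesis
    by (rule summable_on_cong_neutral[THEN iffD1, rotated -1]) auto
qed

lemma summable_diff':
  fixes f g :: "'a \<Rightarrow> 'b::{topological_ab_group_add, t2_space}"
  assumes "f summable_on A" "g summable_on A"
  shows "(\<lambda>x. f x - g x) summable_on A \<and> infsum (\<lambda>x. f x - g x) A = infsum f A - infsum g A"
proof -
  have g': "(\<lambda>x. - g x) summable_on A" using assms(2) summable_on_uminus by blast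
  have "(\<lambda>x. f x + - g x) summable_on A" by (rule summable_on_add[OF assms(1) g'])
  moreover have "infsum (\<lambda>x. f x + - g x) A = infsum f A + infsum (\<lambda>x. - g x) A"
    by (rule infsum_add[OF assms(1) g'])
  ultimately show ?thesis by (simp add: infsum_uminus)
qed

lemma lpnorm_nonneg: "0 \<le> lpnorm p f" by (simp add: lpnorm_def)

lemma lp_spike: "lp p (\<lambda>n. if n = k then c else 0)"
proof -
  have "(\<lambda>n. norm (if n = k then c else 0) powr p) = (\<lambda>n. if n = k then norm c powr p else 0)"
    by auto
  then show ?thesis unfolding lp_def using summable_spike by metis
qed

lemma lpnorm_spike: assumes "p > 0" shows "lpnorm p (\<lambda>n. if n = k then c else 0) = norm c"
proof -
  have "(\<lambda>n. norm (if n = k then c else 0) powr p) = (\<lambda>n. if n = k then norm c powr p else 0)"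
    by auto
  then have "lpnorm p (\<lambda>n. if n = k then c else 0) = (norm c powr p) powr (1/p)"
    unfolding lpnorm_def by (simp add: infsum_spike)
  also have "\<dots> = norm c" using assms by (simp add: powr_powr)
  finally show ?thesis .
qed

lemma lp_coord: assumes "lp p f" "p > 0" shows "norm (f i) \<le> lpnorm p f"
proof -
  have "infsum (\<lambda>n. norm (f n) powr p) {i} \<le> infsum (\<lambda>n. norm (f n) powr p) UNIV"
    using assms(1) unfolding lp_def by (intro infsum_mono_neutral) auto
  then have "norm (f i) powr p \<le> (\<Sum>\<^sub>\<infinity>n. norm (f n) powr p)" by simp
  then have "(norm (f i) powr p) powr (1/p) \<le> (\<Sum>\<^sub>\<infinity>n. norm (f n) powr p) powr (1/p)"
    using assms(2) by (intro powr_mono2) auto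
  then show ?thesis using assms(2) by (simp add: powr_powr lpnorm_def)
qed


lemma lq_spike: assumes "p \<ge> 1"
  shows "lq p (\<lambda>n. if n = k then c else 0) \<and> lqnorm p (\<lambda>n. if n = k then c else 0) = norm c"
proof (cases "p = 1")
  case True
  have b: "\<forall>i. norm (if i = k then c else 0) \<le> norm c" by auto
  have bdd: "bdd_above (range (\<lambda>i. norm (if i = k then c else (0::complex))))"
    using b by (auto intro!: bdd_aboveI)
  have "(SUP i. norm (if i = k then c else (0::complex))) = norm c"
  proof (rule antisym)
    show "(SUP i. norm (if i = k then c else (0::complex))) \<le> norm c"
      using b by (intro cSUP_least) auto
    show "norm c \<le> (SUP i. norm (if i = k then c else (0::complex)))"
      using cSUP_upper[OF UNIV_I bdd, of k] by simp
  qed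
  then show ?thesis using True b unfolding lq_def lqnorm_def by auto
next
  case False
  then have q: "conj_exp p > 0" using assms by (simp add: conj_exp_def)
  have e: "(\<lambda>n. norm (if n = k then c else 0) powr conj_exp p) = (\<lambda>n. if n = k then norm c powr conj_exp p else 0)"
    by auto
  show ?thesis using False q unfolding lq_def lqnorm_def e
    by (simp add: infsum_spike summable_spike powr_powr)
qed

lemma vspike:
  assumes "p > 0"
  shows "((\<lambda>x n. if n = k x then a x else 0) \<in> lpXlp p \<longleftrightarrow> lp p a)
     \<and> nXlp p (\<lambda>x n. if n = k x then a x else 0) = lpnorm p a"
proof -
  have e: "(\<lambda>x. lpnorm p (\<lambda>n. if n = k x then a x else 0) powr p) = (\<lambda>x. norm (a x) powr p)"
    using assms by (simp add: lpnorm_spike)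
  show ?thesis unfolding lpXlp_def nXlp_def lpnorm_def[of p a] lp_def[of p a]
    using e lp_spike by auto
qed

lemma coordX:
  assumes "\<xi> \<in> lpXlp p" "p > 0"
  shows "lp p (\<lambda>x. \<xi> x (k x)) \<and> lpnorm p (\<lambda>x. \<xi> x (k x)) \<le> nXlp p \<xi>"
proof -
  have s: "(\<lambda>x. lpnorm p (\<xi> x) powr p) summable_on UNIV" and l: "\<And>x. lp p (\<xi> x)"
    using assms(1) by (auto simp: lpXlp_def)
  have le: "norm (\<xi> x (k x)) powr p \<le> lpnorm p (\<xi> x) powr p" for x
    using lp_coord[OF l assms(2)] assms(2) by (intro powr_mono2) auto
  have s2: "(\<lambda>x. norm (\<xi> x (k x)) powr p) summable_on UNIV"
    by (rule summable_on_comparison_test[OF s]) (use le in auto)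
  have "(\<Sum>\<^sub>\<infinity>x. norm (\<xi> x (k x)) powr p) \<le> (\<Sum>\<^sub>\<infinity>x. lpnorm p (\<xi> x) powr p)"
    by (rule infsum_mono[OF s2 s le])
  then have "(\<Sum>\<^sub>\<infinity>x. norm (\<xi> x (k x)) powr p) powr (1/p) \<le> (\<Sum>\<^sub>\<infinity>x. lpnorm p (\<xi> x) powr p) powr (1/p)"
    using assms(2) by (intro powr_mono2) (auto intro: infsum_nonneg)
  then show ?thesis using s2 unfolding lp_def lpnorm_def[of p "\<lambda>x. \<xi> x (k x)"] nXlp_def by simp
qed

lemma quasi_tri:
  assumes "lp p u" "lp p v" "p \<ge> 1"
  shows "lp p (\<lambda>i. u i - v i) \<and> lpnorm p (\<lambda>i. u i - v i) \<le> 4 * (lpnorm p u + lpnorm p v)"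
proof -
  define U where "U = (\<Sum>\<^sub>\<infinity>i. norm (u i) powr p)"
  define V where "V = (\<Sum>\<^sub>\<infinity>i. norm (v i) powr p)"
  have su: "(\<lambda>i. norm (u i) powr p) summable_on UNIV" and sv: "(\<lambda>i. norm (v i) powr p) summable_on UNIV"
    using assms by (auto simp: lp_def)
  have U0: "U \<ge> 0" "V \<ge> 0" unfolding U_def V_def by (auto intro: infsum_nonneg)
  have pt: "norm (u i - v i) powr p \<le> 2 powr p * (norm (u i) powr p + norm (v i) powr p)" for i
  proof -
    have "norm (u i - v i) \<le> 2 * max (norm (u i)) (norm (v i))"
      using norm_triangle_ineq4[of "u i" "v i"] by linarith
    then have "norm (u i - v i) powr p \<le> (2 * max (norm (u i)) (norm (v i))) powr p"
      using assms(3) by (intro powr_mono2) auto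
    also have "\<dots> = 2 powr p * max (norm (u i)) (norm (v i)) powr p"
      by (simp add: powr_mult)
    also have "max (norm (u i)) (norm (v i)) powr p \<le> norm (u i) powr p + norm (v i) powr p"
      by (cases "norm (u i) \<le> norm (v i)") (auto simp: max_def)
    finally show ?thesis by simp
  qed
  have sb: "(\<lambda>i. 2 powr p * (norm (u i) powr p + norm (v i) powr p)) summable_on UNIV"
    by (intro summable_on_cmult_right summable_on_add su sv)
  have sd: "(\<lambda>i. norm (u i - v i) powr p) summable_on UNIV"
    by (rule summable_on_comparison_test[OF sb]) (use pt in auto)
  have "(\<Sum>\<^sub>\<infinity>i. norm (u i - v i) powr p) \<le> (\<Sum>\<^sub>\<infinity>i. 2 powr p * (norm (u i) powr p + norm (v i) powr p))"
    by (rule infsum_mono[OF sd sb pt])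
  also have "\<dots> = 2 powr p * (U + V)"
    unfolding U_def V_def by (simp add: infsum_cmult_right' infsum_add[OF su sv])
  finally have D: "(\<Sum>\<^sub>\<infinity>i. norm (u i - v i) powr p) \<le> 2 powr p * (U + V)" .
  have "(\<Sum>\<^sub>\<infinity>i. norm (u i - v i) powr p) powr (1/p) \<le> (2 powr p * (U + V)) powr (1/p)"
    using assms(3) D by (intro powr_mono2) (auto intro: infsum_nonneg)
  also have "\<dots> = 2 * (U + V) powr (1/p)"
    using assms(3) U0 by (simp add: powr_mult powr_powr)
  finally have A1: "(\<Sum>\<^sub>\<infinity>i. norm (u i - v i) powr p) powr (1/p) \<le> 2 * (U + V) powr (1/p)" .
  have A2: "(U + V) powr (1/p) \<le> (2 * max U V) powr (1/p)"
    using assms(3) U0 by (intro powr_mono2) auto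
  have A3: "(2 * max U V) powr (1/p) = 2 powr (1/p) * max U V powr (1/p)"
    using U0 by (simp add: powr_mult)
  have A4: "2 powr (1/p) \<le> (2::real)"
  proof -
    have "2 powr (1/p) \<le> 2 powr (1::real)" using assms(3) by (intro powr_mono) auto
    then show ?thesis by simp
  qed
  have A5: "max U V powr (1/p) \<le> U powr (1/p) + V powr (1/p)"
    by (cases "U \<le> V") (auto simp: max_def)
  have A6: "2 powr (1/p) * max U V powr (1/p) \<le> 2 * (U powr (1/p) + V powr (1/p))"
    using A4 A5 by (intro mult_mono) auto
  have "(\<Sum>\<^sub>\<infinity>i. norm (u i - v i) powr p) powr (1/p) \<le> 2 * (2 * (U powr (1/p) + V powr (1/p)))"
    using A1 A2 A3 A6 by linarith
  then show ?thesis using sd unfolding lp_def lpnorm_def U_def V_def by simp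
qed


lemma delta_lpX: assumes "p > 0"
  shows "(\<lambda>y. if y = x0 then (1::complex) else 0) \<in> lpX p \<and> nX p (\<lambda>y. if y = x0 then (1::complex) else 0) = 1"
  using lp_spike lpnorm_spike[OF assms, of x0 1] by (simp add: lpX_def nX_def)

lemma bddB_C_nonneg: fixes A :: "'x \<Rightarrow> 'x \<Rightarrow> complex" assumes "bddB p A C" "p > 0" shows "0 \<le> C"
proof -
  define \<eta> where "\<eta> = (\<lambda>y. if y = (undefined::'x) then (1::complex) else 0)"
  have "\<eta> \<in> lpX p \<and> nX p \<eta> = 1" unfolding \<eta>_def by (rule delta_lpX[OF assms(2)])
  then have "\<eta> \<in> lpX p" "nX p \<eta> = 1" by auto
  then have "nX p (actB A \<eta>) \<le> C" using assms(1) unfolding bddB_def op_bounded_by_def by force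
  moreover have "0 \<le> nX p (actB A \<eta>)" by (simp add: nX_def lpnorm_nonneg)
  ultimately show ?thesis by simp
qed

lemma bddB_entry: fixes G :: "'x \<Rightarrow> 'x \<Rightarrow> complex" assumes "bddB p G C" "p > 0" shows "norm (G x y) \<le> C"
proof -
  define \<eta> where "\<eta> = (\<lambda>z. if z = y then (1::complex) else 0)"
  have "\<eta> \<in> lpX p \<and> nX p \<eta> = 1" unfolding \<eta>_def by (rule delta_lpX[OF assms(2)])
  then have e: "\<eta> \<in> lpX p" "nX p \<eta> = 1" by auto
  then have "actB G \<eta> \<in> lpX p" "nX p (actB G \<eta>) \<le> C"
    using assms(1) unfolding bddB_def op_bounded_by_def by force+
  moreover have "actB G \<eta> x = G x y"
  proof -
    have "(\<lambda>z. G x z * \<eta> z) = (\<lambda>z. if z = y then G x y else 0)" by (auto simp: \<eta>_def)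
    then show ?thesis by (simp add: actB_def infsum_spike)
  qed
  ultimately show ?thesis using lp_coord[of p "actB G \<eta>" x] assms(2)
    by (simp add: lpX_def nX_def)
qed

lemma bddB_sub:
  fixes A :: "'x \<Rightarrow> 'x \<Rightarrow> complex"
  assumes "bddB p A C1" "bddB p (\<lambda>x y. A x y - G x y) C2" "p \<ge> 1"
  shows "bddB p G (4 * (C1 + C2))"
  unfolding bddB_def op_bounded_by_def
proof (intro conjI ballI allI)
  fix \<eta> :: "'x \<Rightarrow> complex" and x :: 'x assume \<eta>: "\<eta> \<in> lpX p"
  have s1: "(\<lambda>y. A x y * \<eta> y) summable_on UNIV" for x using assms(1) \<eta> by (auto simp: bddB_def)
  have s2: "(\<lambda>y. (A x y - G x y) * \<eta> y) summable_on UNIV" for x using assms(2) \<eta> by (auto simp: bddB_def)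
  have eq: "(\<lambda>y. G x y * \<eta> y) = (\<lambda>y. A x y * \<eta> y - (A x y - G x y) * \<eta> y)" for x
    by (auto simp: algebra_simps)
  show "(\<lambda>y. G x y * \<eta> y) summable_on UNIV" using summable_diff'[OF s1 s2] eq by simp
  have act: "actB G \<eta> = (\<lambda>x. actB A \<eta> x - actB (\<lambda>x y. A x y - G x y) \<eta> x)"
    unfolding actB_def using summable_diff'[OF s1 s2] eq by auto
  have u: "actB A \<eta> \<in> lpX p" "nX p (actB A \<eta>) \<le> C1 * nX p \<eta>"
    using assms(1) \<eta> unfolding bddB_def op_bounded_by_def by auto
  have v: "actB (\<lambda>x y. A x y - G x y) \<eta> \<in> lpX p" "nX p (actB (\<lambda>x y. A x y - G x y) \<eta>) \<le> C2 * nX p \<eta>"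
    using assms(2) \<eta> unfolding bddB_def op_bounded_by_def by auto
  have q: "lp p (actB G \<eta>) \<and> lpnorm p (actB G \<eta>) \<le> 4 * (lpnorm p (actB A \<eta>) + lpnorm p (actB (\<lambda>x y. A x y - G x y) \<eta>))"
    unfolding act using quasi_tri[of p "actB A \<eta>" "actB (\<lambda>x y. A x y - G x y) \<eta>"] u(1) v(1) assms(3)
    by (simp add: lpX_def)
  then show "actB G \<eta> \<in> lpX p" by (simp add: lpX_def)
  show "nX p (actB G \<eta>) \<le> 4 * (C1 + C2) * nX p \<eta>"
    using q u(2) v(2) by (simp add: nX_def algebra_simps)
qed

lemma ER:
  fixes A :: "'x \<Rightarrow> 'x \<Rightarrow> complex"
  assumes "bddB p A C" "p > 0"
  shows "bddEgt p (\<lambda>x y n. if n = k x then A x y else 0) C"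
  unfolding bddEgt_def op_bounded_by_def
proof (intro conjI ballI allI)
  fix \<eta> :: "'x \<Rightarrow> complex" and x :: 'x and n :: nat assume \<eta>: "\<eta> \<in> lpX p"
  have s1: "(\<lambda>y. A x y * \<eta> y) summable_on UNIV" for x using assms(1) \<eta> by (auto simp: bddB_def)
  show "(\<lambda>y. (if n = k x then A x y else 0) * \<eta> y) summable_on UNIV"
    using s1[of x] by (cases "n = k x") auto
  have act: "actEgt (\<lambda>x y n. if n = k x then A x y else 0) \<eta> = (\<lambda>x n. if n = k x then actB A \<eta> x else 0)"
    by (auto simp: actEgt_def actB_def intro!: ext)
  have u: "actB A \<eta> \<in> lpX p" "nX p (actB A \<eta>) \<le> C * nX p \<eta>"
    using assms(1) \<eta> unfolding bddB_def op_bounded_by_def by auto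
  show "actEgt (\<lambda>x y n. if n = k x then A x y else 0) \<eta> \<in> lpXlp p"
    unfolding act using vspike[OF assms(2), of k "actB A \<eta>"] u by (simp add: lpX_def)
  show "nXlp p (actEgt (\<lambda>x y n. if n = k x then A x y else 0) \<eta>) \<le> C * nX p \<eta>"
    unfolding act using vspike[OF assms(2), of k "actB A \<eta>"] u by (simp add: nX_def)
qed

lemma EPhi:
  fixes T :: "'x \<Rightarrow> 'x \<Rightarrow> nat \<Rightarrow> complex"
  assumes "bddEgt p T C" "p > 0"
  shows "bddB p (\<lambda>x y. T x y (k x)) C"
  unfolding bddB_def op_bounded_by_def
proof (intro conjI ballI allI)
  fix \<eta> :: "'x \<Rightarrow> complex" and x :: 'x assume \<eta>: "\<eta> \<in> lpX p"
  show "(\<lambda>y. T x y (k x) * \<eta> y) summable_on UNIV" using assms(1) \<eta> by (auto simp: bddEgt_def)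
  have act: "actB (\<lambda>x y. T x y (k x)) \<eta> = (\<lambda>x. actEgt T \<eta> x (k x))"
    by (auto simp: actEgt_def actB_def)
  have u: "actEgt T \<eta> \<in> lpXlp p" "nXlp p (actEgt T \<eta>) \<le> C * nX p \<eta>"
    using assms(1) \<eta> unfolding bddEgt_def op_bounded_by_def by auto
  show "actB (\<lambda>x y. T x y (k x)) \<eta> \<in> lpX p"
    unfolding act using coordX[OF u(1) assms(2), of k] by (simp add: lpX_def)
  show "nX p (actB (\<lambda>x y. T x y (k x)) \<eta>) \<le> C * nX p \<eta>"
    unfolding act using coordX[OF u(1) assms(2), of k] u(2) by (simp add: nX_def)
qed

lemma L1:
  fixes A :: "'x \<Rightarrow> 'x \<Rightarrow> complex"
  assumes "bddB p A C" "p > 0"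
  shows "bddElt p (\<lambda>x y n. if n = k y then A x y else 0) C"
  unfolding bddElt_def op_bounded_by_def
proof (intro conjI ballI allI)
  fix \<xi> :: "'x \<Rightarrow> nat \<Rightarrow> complex" and x :: 'x assume \<xi>: "\<xi> \<in> lpXlp p"
  define \<eta> where "\<eta> = (\<lambda>y. \<xi> y (k y))"
  have c: "lp p \<eta> \<and> lpnorm p \<eta> \<le> nXlp p \<xi>" unfolding \<eta>_def by (rule coordX[OF \<xi> assms(2)])
  then have \<eta>: "\<eta> \<in> lpX p" by (simp add: lpX_def)
  have s1: "(\<lambda>y. A x y * \<eta> y) summable_on UNIV" for x using assms(1) \<eta> by (auto simp: bddB_def)
  have e: "(\<lambda>n. (if n = k y then A x y else 0) * \<xi> y n) = (\<lambda>n. if n = k y then A x y * \<eta> y else 0)" for x y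
    by (auto simp: \<eta>_def)
  show "(\<lambda>n. (if n = k y then A x y else 0) * \<xi> y n) summable_on UNIV" for y
    unfolding e by (simp add: summable_spike)
  show "(\<lambda>y. \<Sum>\<^sub>\<infinity>n. (if n = k y then A x y else 0) * \<xi> y n) summable_on UNIV"
    unfolding e using s1 by (simp add: infsum_spike)
  have act: "actElt (\<lambda>x y n. if n = k y then A x y else 0) \<xi> = actB A \<eta>"
    unfolding actElt_def actB_def e by (simp add: infsum_spike)
  have u: "actB A \<eta> \<in> lpX p" "nX p (actB A \<eta>) \<le> C * nX p \<eta>"
    using assms(1) \<eta> unfolding bddB_def op_bounded_by_def by auto
  show "actElt (\<lambda>x y n. if n = k y then A x y else 0) \<xi> \<in> lpX p" using act u by simp
  have "C * nX p \<eta> \<le> C * nXlp p \<xi>"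
    using c bddB_C_nonneg[OF assms] by (intro mult_left_mono) (auto simp: nX_def)
  then show "nX p (actElt (\<lambda>x y n. if n = k y then A x y else 0) \<xi>) \<le> C * nXlp p \<xi>"
    using act u by simp
qed

lemma L2:
  fixes S :: "'x \<Rightarrow> 'x \<Rightarrow> nat \<Rightarrow> complex"
  assumes "bddElt p S C" "p > 0"
  shows "bddB p (\<lambda>x y. S x y (k y)) C"
  unfolding bddB_def op_bounded_by_def
proof (intro conjI ballI allI)
  fix \<eta> :: "'x \<Rightarrow> complex" and x :: 'x assume \<eta>: "\<eta> \<in> lpX p"
  define \<xi> where "\<xi> = (\<lambda>y n. if n = k y then \<eta> y else 0)"
  have v: "\<xi> \<in> lpXlp p" "nXlp p \<xi> = nX p \<eta>"
    using vspike[OF assms(2), of k \<eta>] \<eta> unfolding \<xi>_def by (auto simp: lpX_def nX_def)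
  have e: "(\<Sum>\<^sub>\<infinity>n. S x y n * \<xi> y n) = S x y (k y) * \<eta> y" for x y
  proof -
    have "(\<lambda>n. S x y n * \<xi> y n) = (\<lambda>n. if n = k y then S x y (k y) * \<eta> y else 0)"
      by (auto simp: \<xi>_def)
    then show ?thesis by (simp add: infsum_spike)
  qed
  have s: "(\<lambda>y. \<Sum>\<^sub>\<infinity>n. S x y n * \<xi> y n) summable_on UNIV" for x
    using assms(1) v(1) by (auto simp: bddElt_def)
  show "(\<lambda>y. S x y (k y) * \<eta> y) summable_on UNIV" using s[of x] by (simp add: e)
  have act: "actB (\<lambda>x y. S x y (k y)) \<eta> = actElt S \<xi>"
    by (simp add: actB_def actElt_def e)
  have u: "actElt S \<xi> \<in> lpX p" "nX p (actElt S \<xi>) \<le> C * nXlp p \<xi>"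
    using assms(1) v(1) unfolding bddElt_def op_bounded_by_def by auto
  show "actB (\<lambda>x y. S x y (k y)) \<eta> \<in> lpX p" using act u by simp
  show "nX p (actB (\<lambda>x y. S x y (k y)) \<eta>) \<le> C * nX p \<eta>" using act u v by simp
qed


lemma E1:
  fixes T :: "'x::metric_space \<Rightarrow> 'x \<Rightarrow> nat \<Rightarrow> complex"
  assumes "T \<in> Egt p" "p \<ge> 1"
  shows "(\<lambda>x y. T x y (k x)) \<in> Bpu p"
proof -
  have p0: "p > 0" using assms(2) by simp
  obtain C where C: "bddEgt p T C" using assms(1) by (auto simp: Egt_def)
  have "\<exists>G. fin_prop G \<and> (\<exists>C. bddB p G C) \<and> bddB p (\<lambda>x y. T x y (k x) - G x y) \<epsilon>" if e: "\<epsilon> > 0" for \<epsilon>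
  proof -
    obtain G where G: "fin_propV G" "bddEgt p (\<lambda>x y n. T x y n - G x y n) \<epsilon>"
      using assms(1) e unfolding Egt_def by blast
    define G' where "G' = (\<lambda>x y. G x y (k x))"
    have fp: "fin_prop G'" using G(1) unfolding fin_propV_def fin_prop_def G'_def by blast
    have b2: "bddB p (\<lambda>x y. T x y (k x) - G' x y) \<epsilon>"
      using EPhi[OF G(2) p0, of k] unfolding G'_def by simp
    have b1: "bddB p (\<lambda>x y. T x y (k x)) C" by (rule EPhi[OF C p0])
    have "bddB p G' (4 * (C + \<epsilon>))" by (rule bddB_sub[OF b1 b2 assms(2)])
    then show ?thesis using fp b2 by blast
  qed
  then show ?thesis using EPhi[OF C p0, of k] unfolding Bpu_def by blast
qed

lemma E2:
  fixes A :: "'x::metric_space \<Rightarrow> 'x \<Rightarrow> complex"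
  assumes "A \<in> Bpu p" "p \<ge> 1"
  shows "(\<lambda>x y n. if n = k x then A x y else 0) \<in> Egt p"
proof -
  have p0: "p > 0" using assms(2) by simp
  obtain C where C: "bddB p A C" using assms(1) by (auto simp: Bpu_def)
  have "\<exists>G. fin_propV G \<and> (\<exists>C. \<forall>x y. lp p (G x y) \<and> lpnorm p (G x y) \<le> C) \<and>
        bddEgt p (\<lambda>x y n. (if n = k x then A x y else 0) - G x y n) \<epsilon>" if e: "\<epsilon> > 0" for \<epsilon>
  proof -
    obtain G C' where G: "fin_prop G" "bddB p G C'" "bddB p (\<lambda>x y. A x y - G x y) \<epsilon>"
      using assms(1) e unfolding Bpu_def by blast
    define G' where "G' = (\<lambda>x y n. if n = k x then G x y else 0)"
    have fp: "fin_propV G'" using G(1) unfolding fin_propV_def fin_prop_def G'_def by auto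
    have bd: "\<forall>x y. lp p (G' x y) \<and> lpnorm p (G' x y) \<le> C'"
      unfolding G'_def by (auto simp: lp_spike lpnorm_spike[OF p0] bddB_entry[OF G(2) p0])
    have eq: "(\<lambda>x y n. (if n = k x then A x y else 0) - G' x y n) = (\<lambda>x y n. if n = k x then A x y - G x y else 0)"
      unfolding G'_def by (auto intro!: ext)
    have "bddEgt p (\<lambda>x y n. (if n = k x then A x y else 0) - G' x y n) \<epsilon>"
      unfolding eq by (rule ER[OF G(3) p0])
    then show ?thesis using fp bd by blast
  qed
  then show ?thesis using ER[OF C p0, of k] unfolding Egt_def by blast
qed

lemma L3:
  fixes A :: "'x::metric_space \<Rightarrow> 'x \<Rightarrow> complex"
  assumes "A \<in> Bpu p" "p \<ge> 1"
  shows "(\<lambda>x y n. if n = k y then A x y else 0) \<in> Elt p"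
proof -
  have p0: "p > 0" using assms(2) by simp
  obtain C where C: "bddB p A C" using assms(1) by (auto simp: Bpu_def)
  have "\<exists>G. fin_propV G \<and> (\<exists>C. \<forall>x y. lq p (G x y) \<and> lqnorm p (G x y) \<le> C) \<and>
        bddElt p (\<lambda>x y n. (if n = k y then A x y else 0) - G x y n) \<epsilon>" if e: "\<epsilon> > 0" for \<epsilon>
  proof -
    obtain G C' where G: "fin_prop G" "bddB p G C'" "bddB p (\<lambda>x y. A x y - G x y) \<epsilon>"
      using assms(1) e unfolding Bpu_def by blast
    define G' where "G' = (\<lambda>x y n. if n = k y then G x y else 0)"
    have fp: "fin_propV G'" using G(1) unfolding fin_propV_def fin_prop_def G'_def by auto
    have bd: "\<forall>x y. lq p (G' x y) \<and> lqnorm p (G' x y) \<le> C'"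
      unfolding G'_def by (auto simp: lq_spike[OF assms(2)] bddB_entry[OF G(2) p0])
    have eq: "(\<lambda>x y n. (if n = k y then A x y else 0) - G' x y n) = (\<lambda>x y n. if n = k y then A x y - G x y else 0)"
      unfolding G'_def by (auto intro!: ext)
    have "bddElt p (\<lambda>x y n. (if n = k y then A x y else 0) - G' x y n) \<epsilon>"
      unfolding eq by (rule L1[OF G(3) p0])
    then show ?thesis using fp bd by blast
  qed
  then show ?thesis using L1[OF C p0, of k] unfolding Elt_def by blast
qed

lemma L4:
  fixes S :: "'x::metric_space \<Rightarrow> 'x \<Rightarrow> nat \<Rightarrow> complex"
  assumes "S \<in> Elt p" "p \<ge> 1"
  shows "(\<lambda>x y. S x y (k y)) \<in> Bpu p"
proof -
  have p0: "p > 0" using assms(2) by simp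
  obtain C where C: "bddElt p S C" using assms(1) by (auto simp: Elt_def)
  have "\<exists>G. fin_prop G \<and> (\<exists>C. bddB p G C) \<and> bddB p (\<lambda>x y. S x y (k y) - G x y) \<epsilon>" if e: "\<epsilon> > 0" for \<epsilon>
  proof -
    obtain G where G: "fin_propV G" "bddElt p (\<lambda>x y n. S x y n - G x y n) \<epsilon>"
      using assms(1) e unfolding Elt_def by blast
    define G' where "G' = (\<lambda>x y. G x y (k y))"
    have fp: "fin_prop G'" using G(1) unfolding fin_propV_def fin_prop_def G'_def by blast
    have b2: "bddB p (\<lambda>x y. S x y (k y) - G' x y) \<epsilon>"
      using L2[OF G(2) p0, of k] unfolding G'_def by simp
    have b1: "bddB p (\<lambda>x y. S x y (k y)) C" by (rule L2[OF C p0])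
    have "bddB p G' (4 * (C + \<epsilon>))" by (rule bddB_sub[OF b1 b2 assms(2)])
    then show ?thesis using fp b2 by blast
  qed
  then show ?thesis using L2[OF C p0, of k] unfolding Bpu_def by blast
qed

lemma piG_eq: "piG \<iota> T = (\<lambda>x y m. if m = \<iota> x then T x y (\<iota> x) else 0)"
proof (intro ext)
  fix x y m
  have i: "(\<Sum>\<^sub>\<infinity>n. Pmat \<iota> x z m n * T z y n) = (if z = x then (if m = \<iota> x then T x y (\<iota> x) else 0) else 0)" for z
  proof -
    have "(\<lambda>n. Pmat \<iota> x z m n * T z y n) = (\<lambda>n. if n = \<iota> x then (if z = x \<and> m = \<iota> x then T z y (\<iota> x) else 0) else 0)"
      by (auto simp: Pmat_def)
    then show ?thesis by (simp add: infsum_spike)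
  qed
  show "piG \<iota> T x y m = (if m = \<iota> x then T x y (\<iota> x) else 0)"
    unfolding piG_def i by (simp add: infsum_spike)
qed

lemma piL_eq: "piL \<iota> S = (\<lambda>x y n. if n = \<iota> y then S x y (\<iota> y) else 0)"
proof (intro ext)
  fix x y n
  have i: "(\<Sum>\<^sub>\<infinity>m. S x z m * Pmat \<iota> z y m n) = (if z = y then (if n = \<iota> y then S x y (\<iota> y) else 0) else 0)" for z
  proof -
    have "(\<lambda>m. S x z m * Pmat \<iota> z y m n) = (\<lambda>m. if m = \<iota> z then (if z = y \<and> n = \<iota> z then S x z (\<iota> z) else 0) else 0)"
      by (auto simp: Pmat_def)
    then show ?thesis by (simp add: infsum_spike)
  qed
  show "piL \<iota> S x y n = (if n = \<iota> y then S x y (\<iota> y) else 0)"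
    unfolding piL_def i by (simp add: infsum_spike)
qed


theorem lemma4p3:
  fixes p :: real and \<iota> :: "'x::metric_space \<Rightarrow> nat"
    and \<Phi> :: "('x \<Rightarrow> 'x \<Rightarrow> nat \<Rightarrow> complex) \<Rightarrow> ('x \<Rightarrow> 'x \<Rightarrow> complex)"
    and \<Psi> :: "('x \<Rightarrow> 'x \<Rightarrow> complex) \<Rightarrow> ('x \<Rightarrow> 'x \<Rightarrow> nat \<Rightarrow> complex)"
  assumes bg: "bounded_geometry TYPE('x)"
    and p: "1 \<le> p"
    and inj: "inj \<iota>"
    and Phi_def: "\<Phi> = (\<lambda>\<xi> x y. \<xi> x y (\<iota> x))"
    and Psi_def: "\<Psi> = (\<lambda>S x y n. S x y * (if n = \<iota> y then 1 else 0))"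
  shows
    \<comment> \<open>right side: pi(P)^> E^> \<cong> B^p_u(X) as right Banach modules\<close>
    "bij_betw \<Phi> (piG \<iota> ` Egt p) (Bpu p)
     \<and> (\<forall>\<xi>\<in>piG \<iota> ` Egt p. \<forall>\<xi>'\<in>piG \<iota> ` Egt p. \<forall>c a.
          \<Phi> (\<lambda>x y n. c * \<xi> x y n + a * \<xi>' x y n) = (\<lambda>x y. c * \<Phi> \<xi> x y + a * \<Phi> \<xi>' x y))
     \<and> (\<forall>\<xi>\<in>piG \<iota> ` Egt p. \<forall>b\<in>Bpu p. \<Phi> (ract \<xi> b) = mmul (\<Phi> \<xi>) b)
     \<and> (\<exists>K. \<forall>\<xi>\<in>piG \<iota> ` Egt p. \<forall>C. bddEgt p \<xi> C \<longrightarrow> bddB p (\<Phi> \<xi>) (K * C))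
     \<and> (\<exists>K. \<forall>\<xi>\<in>piG \<iota> ` Egt p. \<forall>C. bddB p (\<Phi> \<xi>) C \<longrightarrow> bddEgt p \<xi> (K * C))
     \<comment> \<open>left side: B^p_u(X) \<cong> pi(P)^< E^< as left Banach modules\<close>
     \<and> bij_betw \<Psi> (Bpu p) (piL \<iota> ` Elt p)
     \<and> (\<forall>S\<in>Bpu p. \<forall>S'\<in>Bpu p. \<forall>c a.
          \<Psi> (\<lambda>x y. c * S x y + a * S' x y) = (\<lambda>x y n. c * \<Psi> S x y n + a * \<Psi> S' x y n))
     \<and> (\<forall>b\<in>Bpu p. \<forall>S\<in>Bpu p. \<Psi> (mmul b S) = lact b (\<Psi> S))
     \<and> (\<exists>K. \<forall>S\<in>Bpu p. \<forall>C. bddB p S C \<longrightarrow> bddElt p (\<Psi> S) (K * C))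
     \<and> (\<exists>K. \<forall>S\<in>Bpu p. \<forall>C. bddElt p (\<Psi> S) C \<longrightarrow> bddB p S (K * C))
     \<comment> \<open>compatibility with the pairings\<close>
     \<and> (\<forall>S\<in>Bpu p. \<forall>\<xi>\<in>piG \<iota> ` Egt p. pairing (\<Psi> S) \<xi> = mmul S (\<Phi> \<xi>))"
proof -
  have p0: "p > 0" using p by simp
  define R where "R = (\<lambda>(A::'x \<Rightarrow> 'x \<Rightarrow> complex) x y n. if n = \<iota> x then A x y else (0::complex))"
  define L where "L = (\<lambda>(A::'x \<Rightarrow> 'x \<Rightarrow> complex) x y n. if n = \<iota> y then A x y else (0::complex))"
  have PhiR: "\<Phi> (R A) = A" for A unfolding Phi_def R_def by simp
  have PsiL: "\<Psi> = L" unfolding Psi_def L_def by (auto intro!: ext)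
  have imG: "piG \<iota> ` Egt p = R ` Bpu p"
  proof
    show "piG \<iota> ` Egt p \<subseteq> R ` Bpu p"
    proof
      fix \<xi> assume "\<xi> \<in> piG \<iota> ` Egt p"
      then obtain T where T: "T \<in> Egt p" "\<xi> = piG \<iota> T" by blast
      have "\<xi> = R (\<lambda>x y. T x y (\<iota> x))" unfolding T(2) piG_eq R_def by simp
      moreover have "(\<lambda>x y. T x y (\<iota> x)) \<in> Bpu p" by (rule E1[OF T(1) p])
      ultimately show "\<xi> \<in> R ` Bpu p" by blast
    qed
    show "R ` Bpu p \<subseteq> piG \<iota> ` Egt p"
    proof
      fix \<xi> assume "\<xi> \<in> R ` Bpu p"
      then obtain A where A: "A \<in> Bpu p" "\<xi> = R A" by blast
      have "R A \<in> Egt p" unfolding R_def by (rule E2[OF A(1) p])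
      moreover have "piG \<iota> (R A) = R A" unfolding piG_eq R_def by (auto intro!: ext)
      ultimately show "\<xi> \<in> piG \<iota> ` Egt p" using A(2) by (metis image_eqI)
    qed
  qed
  have imL: "piL \<iota> ` Elt p = L ` Bpu p"
  proof
    show "piL \<iota> ` Elt p \<subseteq> L ` Bpu p"
    proof
      fix \<xi> assume "\<xi> \<in> piL \<iota> ` Elt p"
      then obtain T where T: "T \<in> Elt p" "\<xi> = piL \<iota> T" by blast
      have "\<xi> = L (\<lambda>x y. T x y (\<iota> y))" unfolding T(2) piL_eq L_def by simp
      moreover have "(\<lambda>x y. T x y (\<iota> y)) \<in> Bpu p" by (rule L4[OF T(1) p])
      ultimately show "\<xi> \<in> L ` Bpu p" by blast
    qed
    show "L ` Bpu p \<subseteq> piL \<iota> ` Elt p"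
    proof
      fix \<xi> assume "\<xi> \<in> L ` Bpu p"
      then obtain A where A: "A \<in> Bpu p" "\<xi> = L A" by blast
      have "L A \<in> Elt p" unfolding L_def by (rule L3[OF A(1) p])
      moreover have "piL \<iota> (L A) = L A" unfolding piL_eq L_def by (auto intro!: ext)
      ultimately show "\<xi> \<in> piL \<iota> ` Elt p" using A(2) by (metis image_eqI)
    qed
  qed
  have c1: "bij_betw \<Phi> (piG \<iota> ` Egt p) (Bpu p)"
    unfolding imG bij_betw_def inj_on_def image_image by (auto simp: PhiR)
  have c2: "\<forall>\<xi>\<in>piG \<iota> ` Egt p. \<forall>\<xi>'\<in>piG \<iota> ` Egt p. \<forall>c a.
          \<Phi> (\<lambda>x y n. c * \<xi> x y n + a * \<xi>' x y n) = (\<lambda>x y. c * \<Phi> \<xi> x y + a * \<Phi> \<xi>' x y)"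
    by (simp add: Phi_def)
  have c3: "\<forall>\<xi>\<in>piG \<iota> ` Egt p. \<forall>b\<in>Bpu p. \<Phi> (ract \<xi> b) = mmul (\<Phi> \<xi>) b"
    by (simp add: Phi_def ract_def mmul_def)
  have c4: "\<exists>K. \<forall>\<xi>\<in>piG \<iota> ` Egt p. \<forall>C. bddEgt p \<xi> C \<longrightarrow> bddB p (\<Phi> \<xi>) (K * C)"
  proof (intro exI[of _ 1] ballI allI impI)
    fix \<xi> :: "'x \<Rightarrow> 'x \<Rightarrow> nat \<Rightarrow> complex" and C :: real assume "\<xi> \<in> piG \<iota> ` Egt p" "bddEgt p \<xi> C"
    then show "bddB p (\<Phi> \<xi>) (1 * C)" using EPhi[of p \<xi> C \<iota>] p0 unfolding Phi_def by simp
  qed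
  have c5: "\<exists>K. \<forall>\<xi>\<in>piG \<iota> ` Egt p. \<forall>C. bddB p (\<Phi> \<xi>) C \<longrightarrow> bddEgt p \<xi> (K * C)"
  proof (intro exI[of _ 1] ballI allI impI)
    fix \<xi> :: "'x \<Rightarrow> 'x \<Rightarrow> nat \<Rightarrow> complex" and C :: real assume "\<xi> \<in> piG \<iota> ` Egt p" "bddB p (\<Phi> \<xi>) C"
    then obtain A where A: "\<xi> = R A" "bddB p A C" using imG PhiR by auto
    show "bddEgt p \<xi> (1 * C)" using ER[OF A(2) p0, of \<iota>] A(1) unfolding R_def by simp
  qed
  have c6: "bij_betw \<Psi> (Bpu p) (piL \<iota> ` Elt p)"
    unfolding imL PsiL bij_betw_def
  proof
    show "inj_on L (Bpu p)"
    proof (rule inj_onI)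
      fix A B assume "L A = L B"
      then have "L A x y (\<iota> y) = L B x y (\<iota> y)" for x y by simp
      then show "A = B" unfolding L_def by (auto intro!: ext)
    qed
  qed simp
  have c7: "\<forall>S\<in>Bpu p. \<forall>S'\<in>Bpu p. \<forall>c a.
          \<Psi> (\<lambda>x y. c * S x y + a * S' x y) = (\<lambda>x y n. c * \<Psi> S x y n + a * \<Psi> S' x y n)"
    by (simp add: Psi_def algebra_simps)
  have c8: "\<forall>b\<in>Bpu p. \<forall>S\<in>Bpu p. \<Psi> (mmul b S) = lact b (\<Psi> S)"
    by (auto simp: PsiL L_def mmul_def lact_def intro!: ext)
  have c9: "\<exists>K. \<forall>S\<in>Bpu p. \<forall>C. bddB p S C \<longrightarrow> bddElt p (\<Psi> S) (K * C)"
  proof (intro exI[of _ 1] ballI allI impI)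
    fix S :: "'x \<Rightarrow> 'x \<Rightarrow> complex" and C :: real assume "S \<in> Bpu p" "bddB p S C"
    then show "bddElt p (\<Psi> S) (1 * C)" using L1[of p S C \<iota>] p0 unfolding PsiL L_def by simp
  qed
  have c10: "\<exists>K. \<forall>S\<in>Bpu p. \<forall>C. bddElt p (\<Psi> S) C \<longrightarrow> bddB p S (K * C)"
  proof (intro exI[of _ 1] ballI allI impI)
    fix S :: "'x \<Rightarrow> 'x \<Rightarrow> complex" and C :: real assume "S \<in> Bpu p" "bddElt p (\<Psi> S) C"
    then show "bddB p S (1 * C)" using L2[of p "\<Psi> S" C \<iota>] p0 unfolding PsiL L_def by simp
  qed
  have c11: "\<forall>S\<in>Bpu p. \<forall>\<xi>\<in>piG \<iota> ` Egt p. pairing (\<Psi> S) \<xi> = mmul S (\<Phi> \<xi>)"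
  proof (intro ballI ext)
    fix S :: "'x \<Rightarrow> 'x \<Rightarrow> complex" and \<xi> :: "'x \<Rightarrow> 'x \<Rightarrow> nat \<Rightarrow> complex" and x y :: 'x
    have "(\<Sum>\<^sub>\<infinity>n. \<Psi> S x z n * \<xi> z y n) = S x z * \<xi> z y (\<iota> z)" for z
    proof -
      have "(\<lambda>n. \<Psi> S x z n * \<xi> z y n) = (\<lambda>n. if n = \<iota> z then S x z * \<xi> z y (\<iota> z) else 0)"
        by (auto simp: Psi_def)
      then show ?thesis by (simp add: infsum_spike)
    qed
    then show "pairing (\<Psi> S) \<xi> x y = mmul S (\<Phi> \<xi>) x y"
      by (simp add: pairing_def mmul_def Phi_def)
  qed
  show ?thesis using c1 c2 c3 c4 c5 c6 c7 c8 c9 c10 c11 by blast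
qed


end
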